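(* Consider the two-agent series component maintenance game with repair costs $C_1,C_2>0$ and prior working probabilities $0<p_1,p_2<1$, and write $\overline{p}=1-p$. Let $R\subset\mathbb{R}^+\times\mathbb{R}^+$ be the set of pairs $(x,y)$ satisfying $x\le\overline{p_1}$, $y\le\overline{p_2}$, and ($x\le\overline{p_1}p_2$ or $y\le\overline{p_2}p_1$). Let $s^*=\min_{(x,y)\in R}\|(C_1,C_2)-(x,y)\|_1$. Then for every $s>s^*$ there exists a subsidy scheme $\mathbb{S}$ with total subsidy $s$ such that the system functions (i.e. $\phi(\bm{x}')=1$, both components work after the actions) in every pure Nash equilibrium of the subsidized game. Moreover, any subsidy scheme that guarantees the system functions in every pure Nash equilibrium has total subsidy at least $s^*$.
   Context: Two-agent series component maintenance game: agent $i\in\{1,2\}$ owns component $i$ with independent random state $x_i\in\{0,1\}$, $\Pr[x_i=1]=p_i$; action $s_i\in\{0,1\}$ (1 = repair RE, 0 = do nothing DN); post-action state $x_i'=\max\{x_i,s_i\}$; system state $\phi(\bm{x}')=x_1'\wedge x_2'$. Expected cost of agent $i$: $l_i(s)=C_is_i+1-\Pr[x_1'=x_2'=1]$. Explicitly, (agent 1, agent 2) costs are: DN-DN: $(1-p_1p_2,1-p_1p_2)$; DN-RE: $(\overline{p_1},\overline{p_1}+C_2)$; RE-DN: $(\overline{p_2}+C_1,\overline{p_2})$; RE-RE: $(C_1,C_2)$. Subsidy schemes subsidize repair: agent $i$ receives a nonnegative amount $\sigma_i$ when it repairs, so its subsidized cost is $l_i(s)-\sigma_is_i$; the total subsidy of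 the scheme is $\sigma_1+\sigma_2$. *)

theory Defs
  imports Complex_Main
begin

text \<open>Two-agent series component maintenance game. Actions are booleans:
  True = repair (RE), False = do nothing (DN). A pure strategy profile is a pair
  (a1, a2).\<close>

text \<open>Probability that component i works after action a: x_i' = max x_i s_i.\<close>
definition work_prob :: "real \<Rightarrow> bool \<Rightarrow> real" where
  "work_prob p a = (if a then 1 else p)"

text \<open>Pr[phi(x') = 1] = Pr[x_1' = x_2' = 1] (independent components).\<close>
definition sys_prob :: "real \<Rightarrow> real \<Rightarrow> bool \<times> bool \<Rightarrow> real" where
  "sys_prob p1 p2 a = work_prob p1 (fst a) * work_prob p2 (snd a)"

definition cost1 :: "real \<Rightarrow> real \<Rightarrow> real \<Rightarrow> bool \<times> bool \<Rightarrow> real" where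
  "cost1 C1 p1 p2 a = C1 * of_bool (fst a) + 1 - sys_prob p1 p2 a"

definition cost2 :: "real \<Rightarrow> real \<Rightarrow> real \<Rightarrow> bool \<times> bool \<Rightarrow> real" where
  "cost2 C2 p1 p2 a = C2 * of_bool (snd a) + 1 - sys_prob p1 p2 a"

definition sub_cost1 :: "real \<Rightarrow> real \<Rightarrow> real \<Rightarrow> real \<Rightarrow> bool \<times> bool \<Rightarrow> real" where
  "sub_cost1 C1 p1 p2 \<sigma>1 a = cost1 C1 p1 p2 a - \<sigma>1 * of_bool (fst a)"

definition sub_cost2 :: "real \<Rightarrow> real \<Rightarrow> real \<Rightarrow> real \<Rightarrow> bool \<times> bool \<Rightarrow> real" where
  "sub_cost2 C2 p1 p2 \<sigma>2 a = cost2 C2 p1 p2 a - \<sigma>2 * of_bool (snd a)"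

definition is_PNE :: "real \<Rightarrow> real \<Rightarrow> real \<Rightarrow> real \<Rightarrow> real \<Rightarrow> real \<Rightarrow> bool \<times> bool \<Rightarrow> bool" where
  "is_PNE C1 C2 p1 p2 \<sigma>1 \<sigma>2 a \<longleftrightarrow>
     (\<forall>b. sub_cost1 C1 p1 p2 \<sigma>1 a \<le> sub_cost1 C1 p1 p2 \<sigma>1 (b, snd a)) \<and>
     (\<forall>b. sub_cost2 C2 p1 p2 \<sigma>2 a \<le> sub_cost2 C2 p1 p2 \<sigma>2 (fst a, b))"

text \<open>The subsidy scheme (sigma1, sigma2) guarantees that the system functions
  (phi(x') = 1, almost surely) in every pure Nash equilibrium.\<close>
definition guarantees_functioning :: "real \<Rightarrow> real \<Rightarrow> real \<Rightarrow> real \<Rightarrow> real \<Rightarrow> real \<Rightarrow> bool" where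
  "guarantees_functioning C1 C2 p1 p2 \<sigma>1 \<sigma>2 \<longleftrightarrow>
     (\<forall>a. is_PNE C1 C2 p1 p2 \<sigma>1 \<sigma>2 a \<longrightarrow> sys_prob p1 p2 a = 1)"

definition regionR :: "real \<Rightarrow> real \<Rightarrow> (real \<times> real) set" where
  "regionR p1 p2 = {(x, y). 0 \<le> x \<and> 0 \<le> y \<and> x \<le> 1 - p1 \<and> y \<le> 1 - p2 \<and>
                       (x \<le> (1 - p1) * p2 \<or> y \<le> (1 - p2) * p1)}"

text \<open>s* = min over R of the l1 distance to (C1, C2) (the minimum is attained;
  we write it as an infimum).\<close>
definition sstar :: "real \<Rightarrow> real \<Rightarrow> real \<Rightarrow> real \<Rightarrow> real" where
  "sstar C1 C2 p1 p2 = Inf ((\<lambda>(x, y). \<bar>C1 - x\<bar> + \<bar>C2 - y\<bar>) ` regionR p1 p2)"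

end

theory Submission
  imports Defs
begin

lemma pne_FF: "is_PNE C1 C2 p1 p2 s1 s2 (False,False) \<longleftrightarrow> C1 - s1 \<ge> p2*(1-p1) \<and> C2 - s2 \<ge> p1*(1-p2)"
  by (simp add: is_PNE_def sub_cost1_def sub_cost2_def cost1_def cost2_def sys_prob_def work_prob_def all_bool_eq algebra_simps)
lemma pne_TF: "is_PNE C1 C2 p1 p2 s1 s2 (True,False) \<longleftrightarrow> C1 - s1 \<le> p2*(1-p1) \<and> C2 - s2 \<ge> 1-p2"
  by (simp add: is_PNE_def sub_cost1_def sub_cost2_def cost1_def cost2_def sys_prob_def work_prob_def all_bool_eq algebra_simps)
lemma pne_FT: "is_PNE C1 C2 p1 p2 s1 s2 (False,True) \<longleftrightarrow> C1 - s1 \<ge> 1-p1 \<and> C2 - s2 \<le> p1*(1-p2)"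
  by (simp add: is_PNE_def sub_cost1_def sub_cost2_def cost1_def cost2_def sys_prob_def work_prob_def all_bool_eq algebra_simps)
lemma pne_TT: "is_PNE C1 C2 p1 p2 s1 s2 (True,True) \<longleftrightarrow> C1 - s1 \<le> 1-p1 \<and> C2 - s2 \<le> 1-p2"
  by (simp add: is_PNE_def sub_cost1_def sub_cost2_def cost1_def cost2_def sys_prob_def work_prob_def all_bool_eq algebra_simps)

lemma sys_FF: assumes a: "p1 < 1" "p2 < 1" "0 < p1" shows "sys_prob p1 p2 (False,False) \<noteq> 1"
proof -
  have "p1 * p2 < p1 * 1" using a by (intro mult_strict_left_mono) auto
  then have "p1 * p2 < 1" using a by linarith
  then show ?thesis by (simp add: sys_prob_def work_prob_def)
qed

lemma sys_TF: "p2 < 1 \<Longrightarrow> sys_prob p1 p2 (True,False) \<noteq> 1"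
  unfolding sys_prob_def work_prob_def by simp
lemma sys_FT: "p1 < 1 \<Longrightarrow> sys_prob p1 p2 (False,True) \<noteq> 1"
  unfolding sys_prob_def work_prob_def by simp

lemma gf_suff:
  assumes "C1 - s1 < 1 - p1" "C2 - s2 < 1 - p2" "C1 - s1 < p2*(1-p1) \<or> C2 - s2 < p1*(1-p2)"
  shows "guarantees_functioning C1 C2 p1 p2 s1 s2"
  unfolding guarantees_functioning_def
proof (intro allI impI)
  fix a assume "is_PNE C1 C2 p1 p2 s1 s2 a"
  then show "sys_prob p1 p2 a = 1"
    using assms by (cases a) (auto simp: pne_FF pne_TF pne_FT sys_prob_def work_prob_def split: bool.splits)
qed

lemma gf_nec:
  assumes "guarantees_functioning C1 C2 p1 p2 s1 s2" "0 < p1" "p1 < 1" "0 < p2" "p2 < 1"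
  shows "C1 - s1 \<le> 1 - p1 \<and> C2 - s2 \<le> 1 - p2 \<and> (C1 - s1 < p2*(1-p1) \<or> C2 - s2 < p1*(1-p2))"
proof -
  have FF: "\<not> is_PNE C1 C2 p1 p2 s1 s2 (False,False)"
    using assms sys_FF unfolding guarantees_functioning_def by blast
  have TF: "\<not> is_PNE C1 C2 p1 p2 s1 s2 (True,False)"
    using assms sys_TF unfolding guarantees_functioning_def by blast
  have FT: "\<not> is_PNE C1 C2 p1 p2 s1 s2 (False,True)"
    using assms sys_FT unfolding guarantees_functioning_def by blast
  have a: "p2*(1-p1) \<le> 1 - p1" "p1*(1-p2) \<le> 1-p2" using assms by (simp_all add: mult_le_cancel_right1)
  show ?thesis using FF TF FT a unfolding pne_FF pne_TF pne_FT by linarith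
qed

theorem theorem2:
  fixes C1 C2 p1 p2 :: real
  assumes "C1 > 0" and "C2 > 0"
    and "0 < p1" and "p1 < 1" and "0 < p2" and "p2 < 1"
  shows "(\<forall>s > sstar C1 C2 p1 p2. \<exists>\<sigma>1 \<sigma>2. 0 \<le> \<sigma>1 \<and> 0 \<le> \<sigma>2 \<and> \<sigma>1 + \<sigma>2 = s \<and>
             guarantees_functioning C1 C2 p1 p2 \<sigma>1 \<sigma>2)
       \<and> (\<forall>\<sigma>1 \<sigma>2. 0 \<le> \<sigma>1 \<longrightarrow> 0 \<le> \<sigma>2 \<longrightarrow> guarantees_functioning C1 C2 p1 p2 \<sigma>1 \<sigma>2
             \<longrightarrow> sstar C1 C2 p1 p2 \<le> \<sigma>1 + \<sigma>2)"
proof -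
  let ?f = "\<lambda>(x, y). \<bar>C1 - x\<bar> + \<bar>C2 - y\<bar>"
  let ?S = "?f ` regionR p1 p2"
  have "(0,0) \<in> regionR p1 p2" unfolding regionR_def using assms by auto
  then have ne: "?S \<noteq> {}" by blast
  have bdd: "bdd_below ?S" by (rule bdd_belowI[of _ 0]) auto
  have part1: "\<exists>\<sigma>1 \<sigma>2. 0 \<le> \<sigma>1 \<and> 0 \<le> \<sigma>2 \<and> \<sigma>1 + \<sigma>2 = s \<and> guarantees_functioning C1 C2 p1 p2 \<sigma>1 \<sigma>2"
    if s: "s > sstar C1 C2 p1 p2" for s
  proof -
    obtain d where "d \<in> ?S" "d < s" using cInf_lessD[OF ne] s unfolding sstar_def by blast
    then obtain x y where xy: "(x,y) \<in> regionR p1 p2" and d: "\<bar>C1 - x\<bar> + \<bar>C2 - y\<bar> < s" by auto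
    define e where "e = s - (max (C1-x) 0 + max (C2-y) 0)"
    have e: "e > 0" using d unfolding e_def by linarith
    define s1 where "s1 = max (C1-x) 0 + e/2"
    define s2 where "s2 = max (C2-y) 0 + e/2"
    have c1: "C1 - s1 < x" and c2: "C2 - s2 < y" using e unfolding s1_def s2_def by auto
    have "guarantees_functioning C1 C2 p1 p2 s1 s2"
      apply (rule gf_suff) using xy c1 c2 unfolding regionR_def by (auto simp: mult.commute)
    moreover have "0 \<le> s1" "0 \<le> s2" "s1 + s2 = s" using e unfolding s1_def s2_def e_def by auto
    ultimately show ?thesis by blast
  qed
  have part2: "sstar C1 C2 p1 p2 \<le> s1 + s2"
    if "0 \<le> s1" "0 \<le> s2" "guarantees_functioning C1 C2 p1 p2 s1 s2" for s1 s2
  proof -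
    have g: "C1 - s1 \<le> 1 - p1 \<and> C2 - s2 \<le> 1 - p2 \<and> (C1 - s1 < p2*(1-p1) \<or> C2 - s2 < p1*(1-p2))"
      using gf_nec[OF that(3)] assms by blast
    define x where "x = max (C1 - s1) 0"
    define y where "y = max (C2 - s2) 0"
    have pos: "0 \<le> p2*(1-p1)" "0 \<le> p1*(1-p2)" using assms by simp_all
    have "(x,y) \<in> regionR p1 p2" unfolding regionR_def x_def y_def using g assms pos by (auto simp: mult.commute)
    moreover have "?f (x,y) \<le> s1 + s2" unfolding x_def y_def using that assms by auto
    ultimately have "?f (x,y) \<in> ?S" "?f (x,y) \<le> s1 + s2" by auto
    then show ?thesis unfolding sstar_def using cInf_lower[OF _ bdd] by (meson order_trans)
  qed
  show ?thesis using part1 part2 by blast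
qed

end
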